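(* Let $C\subseteq\mathbb{F}_2^n$ be a code. For every $i\in\{0,\dots,n\}$: (1) $\displaystyle\sum_{j=0}^n\ \sum_{s\in\mathcal S\left(\frac{\delta(C)+(\gamma-1)(i-j)}{2}\right)}\lambda(i,j,s)\,W^{\mathrm{H}}_j(C)\le\binom ni$; (2) $\displaystyle\sum_{j=0}^n\ \sum_{s\in\mathcal S\left(\frac{\hat\delta(C)+(\gamma-1)i}{2}\right)}\lambda(i,j,s)\,W^{\mathrm{H}}_j(C)\le\binom ni$.
   Context: Let $n\ge2$ and fix reals $0<p\le q<1/2$. Let $\gamma:=\log_{q/(1-p)}\left(\frac{p}{1-q}\right)$. For $x\in\mathbb{F}_2^n$, $\omega^{\mathrm{H}}(x)=|\{i:x_i=1\}|$; $d_{ab}(y,x)=|\{i: y_i=a,\ x_i=b\}|$. Discrepancy: $\delta(y,x):=\gamma\,d_{10}(y,x)+d_{01}(y,x)$; symmetric discrepancy: $\hat\delta(y,x):=\delta(y,x)-\omega^{\mathrm{H}}(y)(\gamma-1)$. A code is $C\subseteq\mathbb{F}_2^n$ with $|C|\ge2$; $\delta(C)$, $\hat\delta(C)$ are the minima of $\delta$, $\hat\delta$ over ordered pairs of distinct codewords. $W^{\mathrm{H}}_j(C)$ is the number of codewords of Hamming weight $j$. $\mathcal S:=\{a+\gamma b:a,b\in\mathbb N\}$, $\mathcal S(h):=\{s\in\mathcal S:0\le s<h\}$. For real $a,b$, $\mathrm{Bin}(a,b)=\binom ab$ if $a,b\in\mathbb N$ and $0$ otherwise, and $\lambda(i,j,s):=\mathrm{Bin}\!\left(j,\frac{i\gamma-s+j}{\gamma+1}\right)\mathrm{Bin}\!\left(n-j,\frac{s-j+i}{\gamma+1}\right)$.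 *)

theory Defs
  imports Complex_Main
begin

text \<open>Vectors of F_2^n are represented as boolean lists of length n (True = 1).\<close>

definition vecs :: "nat \<Rightarrow> bool list set" where
  "vecs n = {x. length x = n}"

definition gam :: "real \<Rightarrow> real \<Rightarrow> real" where
  "gam p q = log (q / (1 - p)) (p / (1 - q))"

definition hw :: "bool list \<Rightarrow> nat" where
  "hw x = card {i. i < length x \<and> x ! i}"

definition dab :: "bool \<Rightarrow> bool \<Rightarrow> bool list \<Rightarrow> bool list \<Rightarrow> nat" where
  "dab a b y x = card {i. i < length y \<and> y ! i = a \<and> x ! i = b}"

definition disc :: "real \<Rightarrow> bool list \<Rightarrow> bool list \<Rightarrow> real" where
  "disc g y x = g * real (dab True False y x) + real (dab False True y x)"

definition sdisc :: "real \<Rightarrow> bool list \<Rightarrow> bool list \<Rightarrow> real" where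
  "sdisc g y x = disc g y x - real (hw y) * (g - 1)"

definition is_code :: "nat \<Rightarrow> bool list set \<Rightarrow> bool" where
  "is_code n C \<longleftrightarrow> C \<subseteq> vecs n \<and> card C \<ge> 2"

definition code_disc :: "real \<Rightarrow> bool list set \<Rightarrow> real" where
  "code_disc g C = Min {disc g y x | y x. y \<in> C \<and> x \<in> C \<and> y \<noteq> x}"

definition code_sdisc :: "real \<Rightarrow> bool list set \<Rightarrow> real" where
  "code_sdisc g C = Min {sdisc g y x | y x. y \<in> C \<and> x \<in> C \<and> y \<noteq> x}"

definition WH :: "nat \<Rightarrow> bool list set \<Rightarrow> nat" where
  "WH j C = card {x \<in> C. hw x = j}"

definition Sset :: "real \<Rightarrow> real set" where
  "Sset g = {real a + g * real b | a b. True}"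

definition Sbelow :: "real \<Rightarrow> real \<Rightarrow> real set" where
  "Sbelow g h = {s \<in> Sset g. 0 \<le> s \<and> s < h}"

definition Bin :: "real \<Rightarrow> real \<Rightarrow> real" where
  "Bin a b = (if a \<in> \<nat> \<and> b \<in> \<nat> then real (nat \<lfloor>a\<rfloor> choose nat \<lfloor>b\<rfloor>) else 0)"

definition lam :: "nat \<Rightarrow> real \<Rightarrow> nat \<Rightarrow> nat \<Rightarrow> real \<Rightarrow> real" where
  "lam n g i j s = Bin (real j) ((real i * g - s + real j) / (g + 1))
                 * Bin (real n - real j) ((s - real j + real i) / (g + 1))"

end

theory Submission
  imports Defs
begin


definition ind :: "bool \<Rightarrow> real" where "ind b = of_bool b"

lemma card_sum_ind: "real (card {k. k < (n::nat) \<and> P k}) = (\<Sum>k<n. ind (P k))"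
proof -
  have e: "{k. k < n \<and> P k} = {..<n} \<inter> {k. P k}" by auto
  have "(\<Sum>k<n. ind (P k)) = (\<Sum>k<n. of_bool (P k))" by (simp add: ind_def)
  also have "\<dots> = real (card ({..<n} \<inter> {k. P k}))" by (rule sum_of_bool_eq) simp_all
  finally show ?thesis using e by simp
qed

lemma hw_sum: "length y = n \<Longrightarrow> real (hw y) = (\<Sum>k<n. ind (y!k))"
  unfolding hw_def using card_sum_ind by auto

lemma disc_sum: "length y = n \<Longrightarrow>
   disc g y x = (\<Sum>k<n. g * ind (y!k \<and> \<not> x!k) + ind (\<not> y!k \<and> x!k))"
  unfolding disc_def dab_def
  using card_sum_ind[of n "\<lambda>k. y!k = True \<and> x!k = False"] card_sum_ind[of n "\<lambda>k. y!k = False \<and> x!k = True"]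
  by (simp add: sum.distrib sum_distrib_left)

lemma gam_pos: assumes "0 < p" "p \<le> q" "q < 1/2" shows "gam p q > 0"
proof -
  have a: "ln (q/(1-p)) < 0" using assms by (simp add: ln_less_zero)
  have b: "ln (p/(1-q)) < 0" using assms by (simp add: ln_less_zero)
  show ?thesis unfolding gam_def log_def using a b by (simp add: divide_neg_neg)
qed

lemma part1_pt:
  fixes g :: real assumes "g > 0"
  shows "(g * ind (a \<and> \<not> b) + ind (\<not> a \<and> b)) + (g * ind (b \<and> \<not> a) + ind (\<not> b \<and> a))
    \<le> (2*(g * ind (c \<and> \<not> a) + ind (\<not> c \<and> a)) - (g-1)*(ind c - ind a))
     + (2*(g * ind (c \<and> \<not> b) + ind (\<not> c \<and> b)) - (g-1)*(ind c - ind b))"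
  using assms by (cases a; cases b; cases c) (auto simp: ind_def)

lemma part2_pt:
  fixes g :: real assumes "g > 0"
  shows "2*((g * ind (a \<and> \<not> b) + ind (\<not> a \<and> b)) - ind a * (g-1))
    \<le> (2*(g * ind (c \<and> \<not> a) + ind (\<not> c \<and> a)) - (g-1)*ind c)
     + (2*(g * ind (c \<and> \<not> b) + ind (\<not> c \<and> b)) - (g-1)*ind c)"
  using assms by (cases a; cases b; cases c) (auto simp: ind_def)



definition supp :: "bool list \<Rightarrow> nat set" where "supp y = {k. k < length y \<and> y!k}"

lemma supp_sub: "y \<in> vecs n \<Longrightarrow> supp y \<subseteq> {..<n}"
  by (auto simp: supp_def vecs_def)

lemma supp_inj: "inj_on supp (vecs n)"
proof (rule inj_onI)
  fix y y' assume y: "y \<in> vecs n" and y': "y' \<in> vecs n" and e: "supp y = supp y'"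
  show "y = y'"
  proof (rule nth_equalityI)
    show "length y = length y'" using y y' by (simp add: vecs_def)
    fix k assume "k < length y"
    then show "y!k = y'!k" using e y y' unfolding supp_def vecs_def by (auto simp: set_eq_iff)
  qed
qed

lemma supp_onto: "Y \<subseteq> {..<n} \<Longrightarrow> map (\<lambda>k. k \<in> Y) [0..<n] \<in> vecs n \<and> supp (map (\<lambda>k. k \<in> Y) [0..<n]) = Y"
  by (auto simp: supp_def vecs_def)

lemma card_vecs_pred: "card {y\<in>vecs n. P (supp y)} = card {Y. Y \<subseteq> {..<n} \<and> P Y}"
proof -
  have "supp ` {y\<in>vecs n. P (supp y)} = {Y. Y \<subseteq> {..<n} \<and> P Y}"
  proof
    show "supp ` {y\<in>vecs n. P (supp y)} \<subseteq> {Y. Y \<subseteq> {..<n} \<and> P Y}" using supp_sub by auto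
    show "{Y. Y \<subseteq> {..<n} \<and> P Y} \<subseteq> supp ` {y\<in>vecs n. P (supp y)}"
    proof
      fix Y assume "Y \<in> {Y. Y \<subseteq> {..<n} \<and> P Y}"
      then show "Y \<in> supp ` {y\<in>vecs n. P (supp y)}" using supp_onto[of Y n]
        by (intro image_eqI[of _ _ "map (\<lambda>k. k \<in> Y) [0..<n]"]) auto
    qed
  qed
  moreover have "inj_on supp {y\<in>vecs n. P (supp y)}" by (rule inj_on_subset[OF supp_inj]) auto
  ultimately show ?thesis using card_image by metis
qed

lemma hw_supp: "hw y = card (supp y)" by (simp add: hw_def supp_def)

lemma dab_supp: "length x = length y \<Longrightarrow> dab True False y x = card (supp y - supp x)
   \<and> dab False True y x = card (supp x - supp y)"
  unfolding dab_def supp_def by (auto intro!: arg_cong[where f=card])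

lemma card_split:
  assumes X: "X \<subseteq> {..<n}"
  shows "card {Y. Y \<subseteq> {..<n} \<and> card (Y \<inter> X) = u \<and> card (Y - X) = a}
     = (card X choose u) * ((n - card X) choose a)"
proof -
  let ?L = "{Y. Y \<subseteq> {..<n} \<and> card (Y \<inter> X) = u \<and> card (Y - X) = a}"
  let ?R = "{U. U \<subseteq> X \<and> card U = u} \<times> {A. A \<subseteq> {..<n} - X \<and> card A = a}"
  have fX: "finite X" using X finite_subset by blast
  have im: "(\<lambda>Y. (Y \<inter> X, Y - X)) ` ?L = ?R"
  proof
    show "(\<lambda>Y. (Y \<inter> X, Y - X)) ` ?L \<subseteq> ?R"
    proof
      fix P assume "P \<in> (\<lambda>Y. (Y \<inter> X, Y - X)) ` ?L"
      then obtain Y where "Y \<in> ?L" "P = (Y \<inter> X, Y - X)" by blast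
      then show "P \<in> ?R" by auto
    qed
    show "?R \<subseteq> (\<lambda>Y. (Y \<inter> X, Y - X)) ` ?L"
    proof
      fix P assume "P \<in> ?R"
      then obtain U A where P: "P = (U, A)" and U: "U \<subseteq> X" "card U = u" and A: "A \<subseteq> {..<n} - X" "card A = a"
        by auto
      have e1: "(U \<union> A) \<inter> X = U" using U A by auto
      have e2: "(U \<union> A) - X = A" using U A by auto
      have "U \<union> A \<subseteq> {..<n}" using U A X by blast
      then have "U \<union> A \<in> ?L" using e1 e2 U A by simp
      moreover have "P = ((U \<union> A) \<inter> X, (U \<union> A) - X)" using e1 e2 P by simp
      ultimately show "P \<in> (\<lambda>Y. (Y \<inter> X, Y - X)) ` ?L" by blast
    qed
  qed
  have inj: "inj_on (\<lambda>Y. (Y \<inter> X, Y - X)) ?L"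
  proof (rule inj_onI)
    fix Y Y' assume "(Y \<inter> X, Y - X) = (Y' \<inter> X, Y' - X)"
    then show "Y = Y'" by blast
  qed
  have "card ?L = card ?R" using card_image[OF inj] im by simp
  also have "\<dots> = (card X choose u) * (card ({..<n} - X) choose a)"
    using fX by (simp add: card_cartesian_product n_subsets)
  also have "card ({..<n} - X) = n - card X" using X fX by (simp add: card_Diff_subset)
  finally show ?thesis .
qed



lemma alg:
  fixes g u a c i j s :: real
  assumes "g + 1 > 0" "j = u + c"
  shows "(u + a = i \<and> g*a + c = s) \<longleftrightarrow> (u = (i*g - s + j)/(g+1) \<and> a = (s - j + i)/(g+1))"
proof
  assume h: "u + a = i \<and> g*a + c = s"
  then have hi: "i = u + a" "s = g*a + c" by simp_all
  have "a*(g+1) = s + i - j" using assms hi by (simp add: algebra_simps)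
  moreover have "u*(g+1) = i*g - s + j" using hi assms by (simp add: algebra_simps)
  ultimately show "u = (i*g - s + j)/(g+1) \<and> a = (s - j + i)/(g+1)" using assms
    by (simp add: field_simps)
next
  assume h: "u = (i*g - s + j)/(g+1) \<and> a = (s - j + i)/(g+1)"
  then have h1: "u*(g+1) = i*g - s + j" "a*(g+1) = s + i - j" using assms by (simp_all add: field_simps)
  then have "(u + a)*(g+1) = i*(g+1)" by (simp add: algebra_simps)
  then have "u + a = i" using assms by simp
  moreover have "g*a + c = s" using h1 \<open>u + a = i\<close> assms by (simp add: algebra_simps)
  ultimately show "u + a = i \<and> g*a + c = s" by simp
qed

lemma lam_count:
  assumes g: "g > 0" and x: "x \<in> vecs n" and j: "hw x = j"
  shows "real (card {y\<in>vecs n. hw y = i \<and> disc g y x = s}) = lam n g i j s"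
proof -
  define X where "X = supp x"
  have Xn: "X \<subseteq> {..<n}" using supp_sub[OF x] X_def by simp
  have fX: "finite X" using Xn finite_subset by blast
  have cX: "card X = j" using j X_def hw_supp by simp
  have jn: "j \<le> n" using card_mono[OF _ Xn] cX by simp
  define Q where "Q Y = (card Y = i \<and> g * real (card (Y - X)) + real (card (X - Y)) = s)" for Y
  have s1: "{y\<in>vecs n. hw y = i \<and> disc g y x = s} = {y\<in>vecs n. Q (supp y)}"
  proof (rule Collect_cong)
    fix y show "(y \<in> vecs n \<and> hw y = i \<and> disc g y x = s) = (y \<in> vecs n \<and> Q (supp y))"
    proof (cases "y \<in> vecs n")
      case True
      then have "length x = length y" using x by (simp add: vecs_def)
      then show ?thesis using True dab_supp[of x y] unfolding Q_def disc_def X_def hw_supp by simp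
    qed simp
  qed
  define U where "U = (real i * g - s + real j)/(g+1)"
  define A where "A = (s - real j + real i)/(g+1)"
  have key: "Q Y \<longleftrightarrow> real (card (Y \<inter> X)) = U \<and> real (card (Y - X)) = A" if Y: "Y \<subseteq> {..<n}" for Y
  proof -
    have fY: "finite Y" using Y finite_subset by blast
    have c1: "card Y = card (Y \<inter> X) + card (Y - X)" using card_Int_Diff[OF fY] .
    have c2: "card X = card (Y \<inter> X) + card (X - Y)" using card_Int_Diff[OF fX, of Y] by (simp add: Int_commute)
    have hj: "real j = real (card (Y \<inter> X)) + real (card (X - Y))" using c2 cX by simp
    have gp: "g + 1 > 0" using g by simp
    have "Q Y \<longleftrightarrow> (real (card (Y \<inter> X)) + real (card (Y - X)) = real i \<and> g * real (card (Y - X)) + real (card (X - Y)) = s)"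
      unfolding Q_def c1 of_nat_add[symmetric] of_nat_eq_iff by simp
    also have "\<dots> \<longleftrightarrow> real (card (Y \<inter> X)) = U \<and> real (card (Y - X)) = A"
      unfolding U_def A_def
      by (rule alg[OF gp hj])
    finally show ?thesis .
  qed
  have cnt: "real (card {y\<in>vecs n. hw y = i \<and> disc g y x = s})
      = real (card {Y. Y \<subseteq> {..<n} \<and> real (card (Y \<inter> X)) = U \<and> real (card (Y - X)) = A})"
  proof -
    have "{Y. Y \<subseteq> {..<n} \<and> Q Y} = {Y. Y \<subseteq> {..<n} \<and> real (card (Y \<inter> X)) = U \<and> real (card (Y - X)) = A}"
      using key by blast
    then show ?thesis unfolding s1 card_vecs_pred by simp
  qed
  have lamUA: "lam n g i j s = Bin (real j) U * Bin (real n - real j) A"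
    unfolding lam_def U_def A_def by simp
  show ?thesis
  proof (cases "U \<in> \<nat> \<and> A \<in> \<nat>")
    case True
    then obtain u0 a0 where u0: "U = real u0" and a0: "A = real a0" by (auto elim!: Nats_cases)
    have "real (card {y\<in>vecs n. hw y = i \<and> disc g y x = s}) = real ((j choose u0) * ((n - j) choose a0))"
      unfolding cnt u0 a0 of_nat_eq_iff using card_split[OF Xn, of u0 a0] cX by simp
    moreover have nj: "real n - real j = real (n - j)" using jn by simp
    have "Bin (real j) (real u0) = real (j choose u0)" unfolding Bin_def by simp
    moreover have "Bin (real (n - j)) (real a0) = real ((n - j) choose a0)" unfolding Bin_def by simp
    ultimately show ?thesis unfolding lamUA u0 a0 nj by simp
  next
    case False
    have "{Y. Y \<subseteq> {..<n} \<and> real (card (Y \<inter> X)) = U \<and> real (card (Y - X)) = A} = {}"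
    proof (rule ccontr)
      assume "{Y. Y \<subseteq> {..<n} \<and> real (card (Y \<inter> X)) = U \<and> real (card (Y - X)) = A} \<noteq> {}"
      then obtain Y where "real (card (Y \<inter> X)) = U" "real (card (Y - X)) = A" by blast
      then have "U \<in> \<nat> \<and> A \<in> \<nat>" by (metis of_nat_in_Nats)
      then show False using False by simp
    qed
    then have z: "real (card {y\<in>vecs n. hw y = i \<and> disc g y x = s}) = 0" using cnt by simp
    have "lam n g i j s = 0" unfolding lamUA Bin_def using False by auto
    then show ?thesis using z by simp
  qed
qed



lemma disc_nonneg: "g > 0 \<Longrightarrow> disc g y x \<ge> 0"
  unfolding disc_def by simp

lemma disc_inS: "disc g y x \<in> Sset g"
proof -
  have "disc g y x = real (dab False True y x) + g * real (dab True False y x)" unfolding disc_def by simp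
  then show ?thesis unfolding Sset_def by blast
qed

lemma Sbelow_finite: assumes g: "g > 0" shows "finite (Sbelow g h)"
proof -
  have "Sbelow g h \<subseteq> (\<lambda>(a,b). real a + g * real b) ` ({..nat \<lceil>h\<rceil>} \<times> {..nat \<lceil>h/g\<rceil>})"
  proof
    fix s assume "s \<in> Sbelow g h"
    then obtain a b :: nat where s: "s = real a + g * real b" and s0: "0 \<le> s" and sh: "s < h"
      unfolding Sbelow_def Sset_def by auto
    have "real a \<le> s" using s g by simp
    then have "a \<le> nat \<lceil>h\<rceil>" using sh by linarith
    moreover have "g * real b \<le> s" using s by simp
    then have "real b \<le> h / g" using sh g by (simp add: field_simps)
    then have "b \<le> nat \<lceil>h/g\<rceil>" by linarith
    ultimately show "s \<in> (\<lambda>(a,b). real a + g * real b) ` ({..nat \<lceil>h\<rceil>} \<times> {..nat \<lceil>h/g\<rceil>})"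
      using s by force
  qed
  then show ?thesis by (rule finite_subset) simp
qed

lemma sum_fibres:
  assumes "finite S" "finite V"
  shows "(\<Sum>s\<in>S. real (card {y\<in>V. f y = s})) = real (card {y\<in>V. f y \<in> S})"
proof -
  have e: "{y\<in>V. f y \<in> S} = (\<Union>s\<in>S. {y\<in>V. f y = s})" by auto
  have "card (\<Union>s\<in>S. {y\<in>V. f y = s}) = (\<Sum>s\<in>S. card {y\<in>V. f y = s})"
    using assms by (intro card_UN_disjoint) auto
  then show ?thesis unfolding e by simp
qed

lemma finite_vecs: "finite (vecs n)"
proof -
  have "vecs n = {xs. set xs \<subseteq> UNIV \<and> length xs = n}" by (auto simp: vecs_def)
  then show ?thesis using finite_lists_length_eq[of "UNIV :: bool set" n] by simp
qed

lemma per_x: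
  assumes g: "g > 0" and x: "x \<in> vecs n"
  shows "(\<Sum>s\<in>Sbelow g h. lam n g i (hw x) s) = real (card {y\<in>vecs n. hw y = i \<and> disc g y x < h})"
proof -
  let ?V = "{y\<in>vecs n. hw y = i}"
  have fV: "finite ?V" using finite_vecs by simp
  have "(\<Sum>s\<in>Sbelow g h. lam n g i (hw x) s) = (\<Sum>s\<in>Sbelow g h. real (card {y\<in>?V. disc g y x = s}))"
  proof (rule sum.cong)
    fix s show "lam n g i (hw x) s = real (card {y\<in>?V. disc g y x = s})"
      using lam_count[OF g x refl, of i s] by (simp add: conj_assoc)
  qed simp
  also have "\<dots> = real (card {y\<in>?V. disc g y x \<in> Sbelow g h})"
    by (rule sum_fibres[OF Sbelow_finite[OF g] fV])
  also have "{y\<in>?V. disc g y x \<in> Sbelow g h} = {y\<in>vecs n. hw y = i \<and> disc g y x < h}"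
    unfolding Sbelow_def using disc_inS disc_nonneg[OF g] by auto
  finally show ?thesis .
qed

lemma card_weight: "card {y\<in>vecs n. hw y = i} = n choose i"
proof -
  have "card {y\<in>vecs n. hw y = i} = card {Y. Y \<subseteq> {..<n} \<and> card Y = i}"
    unfolding hw_supp by (rule card_vecs_pred)
  also have "\<dots> = n choose i" using n_subsets[of "{..<n}" i] by simp
  finally show ?thesis .
qed

lemma packing:
  assumes g: "g > 0" and C: "C \<subseteq> vecs n"
    and disj: "\<And>x x' y. x \<in> C \<Longrightarrow> x' \<in> C \<Longrightarrow> x \<noteq> x' \<Longrightarrow> y \<in> vecs n \<Longrightarrow> hw y = i
        \<Longrightarrow> disc g y x < H x \<Longrightarrow> disc g y x' < H x' \<Longrightarrow> False"
  shows "(\<Sum>x\<in>C. \<Sum>s\<in>Sbelow g (H x). lam n g i (hw x) s) \<le> real (n choose i)"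
proof -
  have fC: "finite C" using C finite_vecs finite_subset by blast
  define B where "B x = {y\<in>vecs n. hw y = i \<and> disc g y x < H x}" for x
  have "(\<Sum>x\<in>C. \<Sum>s\<in>Sbelow g (H x). lam n g i (hw x) s) = (\<Sum>x\<in>C. real (card (B x)))"
    using per_x[OF g] C B_def by (intro sum.cong) auto
  also have "\<dots> = real (card (\<Union>x\<in>C. B x))"
  proof -
    have "card (\<Union>x\<in>C. B x) = (\<Sum>x\<in>C. card (B x))"
    proof (rule card_UN_disjoint)
      show "finite C" by (rule fC)
      show "\<forall>x\<in>C. finite (B x)" unfolding B_def using finite_vecs by simp
      show "\<forall>x\<in>C. \<forall>x'\<in>C. x \<noteq> x' \<longrightarrow> B x \<inter> B x' = {}"
        unfolding B_def using disj by blast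
    qed
    then show ?thesis by simp
  qed
  also have "\<dots> \<le> real (card {y\<in>vecs n. hw y = i})"
    unfolding B_def using finite_vecs by (intro of_nat_mono card_mono) auto
  also have "\<dots> = real (n choose i)" using card_weight by simp
  finally show ?thesis .
qed

lemma hw_le: "x \<in> vecs n \<Longrightarrow> hw x \<le> n"
  using card_mono[OF _ supp_sub] hw_supp by fastforce

lemma regroup:
  assumes C: "C \<subseteq> vecs n"
  shows "(\<Sum>j = 0..n. \<Sum>s\<in>Sbelow g (H j). lam n g i j s * real (WH j C))
       = (\<Sum>x\<in>C. \<Sum>s\<in>Sbelow g (H (hw x)). lam n g i (hw x) s)"
proof -
  have fC: "finite C" using C finite_vecs finite_subset by blast
  define F where "F j = (\<Sum>s\<in>Sbelow g (H j). lam n g i j s)" for j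
  have "(\<Sum>j = 0..n. \<Sum>s\<in>Sbelow g (H j). lam n g i j s * real (WH j C))
      = (\<Sum>j = 0..n. \<Sum>x\<in>{x. x \<in> C \<and> hw x = j}. F (hw x))"
  proof (rule sum.cong)
    fix j
    have "(\<Sum>s\<in>Sbelow g (H j). lam n g i j s * real (WH j C)) = F j * real (WH j C)"
      unfolding F_def by (simp add: sum_distrib_right)
    also have "\<dots> = (\<Sum>x\<in>{x. x \<in> C \<and> hw x = j}. F (hw x))"
      unfolding WH_def by simp
    finally show "(\<Sum>s\<in>Sbelow g (H j). lam n g i j s * real (WH j C)) = (\<Sum>x\<in>{x. x \<in> C \<and> hw x = j}. F (hw x))" .
  qed simp
  also have "\<dots> = (\<Sum>x\<in>C. F (hw x))"
    by (rule sum.group[OF fC]) (use C hw_le in auto)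
  finally show ?thesis unfolding F_def .
qed



lemma code_vecs: "is_code n C \<Longrightarrow> C \<subseteq> vecs n" using is_code_def by simp

lemma code_fin: "is_code n C \<Longrightarrow> finite C"
  using code_vecs finite_vecs finite_subset by blast

lemma code_disc_le:
  assumes "is_code n C" "x \<in> C" "x' \<in> C" "x \<noteq> x'"
  shows "code_disc g C \<le> disc g x x'"
proof -
  have fC: "finite C" using code_fin assms by blast
  have f1: "finite {disc g y x | y x. y \<in> C \<and> x \<in> C \<and> y \<noteq> x}"
    by (rule finite_subset[of _ "(\<lambda>(y,x). disc g y x) ` (C \<times> C)"]) (use fC in auto)
  show ?thesis unfolding code_disc_def
    by (rule Min_le[OF f1]) (use assms in blast)
qed

lemma code_sdisc_le:
  assumes "is_code n C" "x \<in> C" "x' \<in> C" "x \<noteq> x'"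
  shows "code_sdisc g C \<le> sdisc g x x'"
proof -
  have fC: "finite C" using code_fin assms by blast
  have f1: "finite {sdisc g y x | y x. y \<in> C \<and> x \<in> C \<and> y \<noteq> x}"
    by (rule finite_subset[of _ "(\<lambda>(y,x). sdisc g y x) ` (C \<times> C)"]) (use fC in auto)
  show ?thesis unfolding code_sdisc_def
    by (rule Min_le[OF f1]) (use assms in blast)
qed

lemma ineq1:
  assumes g: "g > 0" and x: "x \<in> vecs n" and x': "x' \<in> vecs n" and y: "y \<in> vecs n"
  shows "disc g x x' + disc g x' x \<le> (2 * disc g y x - (g-1) * (real (hw y) - real (hw x)))
          + (2 * disc g y x' - (g-1) * (real (hw y) - real (hw x')))"
proof -
  have l: "length x = n" "length x' = n" "length y = n" using x x' y by (auto simp: vecs_def)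
  have "(\<Sum>k<n. (g * ind (x!k \<and> \<not> x'!k) + ind (\<not> x!k \<and> x'!k)) + (g * ind (x'!k \<and> \<not> x!k) + ind (\<not> x'!k \<and> x!k)))
     \<le> (\<Sum>k<n. (2*(g * ind (y!k \<and> \<not> x!k) + ind (\<not> y!k \<and> x!k)) - (g-1)*(ind (y!k) - ind (x!k)))
     + (2*(g * ind (y!k \<and> \<not> x'!k) + ind (\<not> y!k \<and> x'!k)) - (g-1)*(ind (y!k) - ind (x'!k))))"
    by (rule sum_mono) (rule part1_pt[OF g])
  then show ?thesis using l
    by (simp add: disc_sum hw_sum sum.distrib sum_subtractf sum_distrib_left[symmetric] right_diff_distrib[symmetric])
qed

lemma ineq2:
  assumes g: "g > 0" and x: "x \<in> vecs n" and x': "x' \<in> vecs n" and y: "y \<in> vecs n"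
  shows "2 * sdisc g x x' \<le> (2 * disc g y x - (g-1) * real (hw y))
          + (2 * disc g y x' - (g-1) * real (hw y))"
proof -
  have l: "length x = n" "length x' = n" "length y = n" using x x' y by (auto simp: vecs_def)
  have "(\<Sum>k<n. 2*((g * ind (x!k \<and> \<not> x'!k) + ind (\<not> x!k \<and> x'!k)) - ind (x!k) * (g-1)))
     \<le> (\<Sum>k<n. (2*(g * ind (y!k \<and> \<not> x!k) + ind (\<not> y!k \<and> x!k)) - (g-1)*ind (y!k))
     + (2*(g * ind (y!k \<and> \<not> x'!k) + ind (\<not> y!k \<and> x'!k)) - (g-1)*ind (y!k)))"
    by (rule sum_mono) (rule part2_pt[OF g])
  then show ?thesis using l unfolding sdisc_def
    by (simp add: disc_sum hw_sum sum.distrib sum_subtractf sum_distrib_left[symmetric] sum_distrib_right[symmetric] right_diff_distrib[symmetric])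
qed

theorem mainTheorem15:
  fixes n :: nat and p q :: real and C :: "bool list set"
  assumes "n \<ge> 2" and "0 < p" and "p \<le> q" and "q < 1/2"
    and "is_code n C"
  shows "\<forall>i \<le> n.
     (\<Sum>j = 0..n. \<Sum>s \<in> Sbelow (gam p q) ((code_disc (gam p q) C + (gam p q - 1) * (real i - real j)) / 2).
         lam n (gam p q) i j s * real (WH j C)) \<le> real (n choose i)
   \<and> (\<Sum>j = 0..n. \<Sum>s \<in> Sbelow (gam p q) ((code_sdisc (gam p q) C + (gam p q - 1) * real i) / 2).
         lam n (gam p q) i j s * real (WH j C)) \<le> real (n choose i)"
proof (intro allI impI conjI)
  fix i assume "i \<le> n"
  define g where "g = gam p q"
  have g: "g > 0" unfolding g_def using gam_pos assms by blast
  have Cv: "C \<subseteq> vecs n" using code_vecs assms by blast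
  define D where "D = code_disc g C"
  define E where "E = code_sdisc g C"
  have "(\<Sum>j = 0..n. \<Sum>s \<in> Sbelow g ((D + (g - 1) * (real i - real j)) / 2). lam n g i j s * real (WH j C))
     = (\<Sum>x\<in>C. \<Sum>s\<in>Sbelow g ((\<lambda>j. (D + (g - 1) * (real i - real j)) / 2) (hw x)). lam n g i (hw x) s)"
    by (rule regroup[OF Cv, where H="\<lambda>j. (D + (g - 1) * (real i - real j)) / 2"])
  also have "\<dots> \<le> real (n choose i)"
  proof (rule packing[OF g Cv])
    fix x x' y assume xC: "x \<in> C" and x'C: "x' \<in> C" and ne: "x \<noteq> x'" and y: "y \<in> vecs n" and hy: "hw y = i"
      and h1: "disc g y x < (\<lambda>j. (D + (g - 1) * (real i - real j)) / 2) (hw x)"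
      and h2: "disc g y x' < (\<lambda>j. (D + (g - 1) * (real i - real j)) / 2) (hw x')"
    have "disc g x x' + disc g x' x \<le> (2 * disc g y x - (g-1) * (real (hw y) - real (hw x)))
          + (2 * disc g y x' - (g-1) * (real (hw y) - real (hw x')))"
      using ineq1[OF g _ _ y] xC x'C Cv by blast
    moreover have "D \<le> disc g x x'" "D \<le> disc g x' x"
      unfolding D_def using code_disc_le assms(5) xC x'C ne by metis+
    ultimately show False using h1 h2 hy by simp
  qed
  finally show "(\<Sum>j = 0..n. \<Sum>s \<in> Sbelow (gam p q) ((code_disc (gam p q) C + (gam p q - 1) * (real i - real j)) / 2).
         lam n (gam p q) i j s * real (WH j C)) \<le> real (n choose i)"
    unfolding g_def D_def .
next
  fix i assume "i \<le> n"
  define g where "g = gam p q"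
  have g: "g > 0" unfolding g_def using gam_pos assms by blast
  have Cv: "C \<subseteq> vecs n" using code_vecs assms by blast
  define E where "E = code_sdisc g C"
  have "(\<Sum>j = 0..n. \<Sum>s \<in> Sbelow g ((E + (g - 1) * real i) / 2). lam n g i j s * real (WH j C))
     = (\<Sum>x\<in>C. \<Sum>s\<in>Sbelow g ((\<lambda>j. (E + (g - 1) * real i) / 2) (hw x)). lam n g i (hw x) s)"
    by (rule regroup[OF Cv, where H="\<lambda>j. (E + (g - 1) * real i) / 2"])
  also have "\<dots> \<le> real (n choose i)"
  proof (rule packing[OF g Cv])
    fix x x' y assume xC: "x \<in> C" and x'C: "x' \<in> C" and ne: "x \<noteq> x'" and y: "y \<in> vecs n" and hy: "hw y = i"
      and h1: "disc g y x < (\<lambda>j. (E + (g - 1) * real i) / 2) (hw x)"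
      and h2: "disc g y x' < (\<lambda>j. (E + (g - 1) * real i) / 2) (hw x')"
    have "2 * sdisc g x x' \<le> (2 * disc g y x - (g-1) * real (hw y))
          + (2 * disc g y x' - (g-1) * real (hw y))"
      using ineq2[OF g _ _ y] xC x'C Cv by blast
    then have i1: "2 * sdisc g x x' \<le> (2 * disc g y x - (g-1) * real i)
          + (2 * disc g y x' - (g-1) * real i)" using hy by simp
    have h1': "2 * disc g y x < E + (g-1) * real i" using h1 by simp
    have h2': "2 * disc g y x' < E + (g-1) * real i" using h2 by simp
    have "E \<le> sdisc g x x'"
      unfolding E_def using code_sdisc_le assms(5) xC x'C ne by metis
    then show False using i1 h1' h2' by linarith
  qed
  finally show "(\<Sum>j = 0..n. \<Sum>s \<in> Sbelow (gam p q) ((code_sdisc (gam p q) C + (gam p q - 1) * real i) / 2).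
         lam n (gam p q) i j s * real (WH j C)) \<le> real (n choose i)"
    unfolding g_def E_def .
qed


end
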